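(* Let $j\ge 2$ be an integer and let $\bar\alpha_j$ be the largest $\alpha\ge 0$ such that $\left(1-e^{-\alpha^{j-1}x^{j-1}}\right)^{j-1}\le x$ for all $x\in(0,1]$. For $\alpha>0$ and an integer $k\ge 2$ with $\delta:=\alpha(k-1)^{-j/(j-1)}\le 1$, define the sequence $x_0=\delta$ and $$x_{i+1}=\delta\left(1-\Bigl[1-(1-\delta)\bigl(1-(1-x_i)^{k-1}\bigr)^{j-1}-x_i\Bigr]^{k-1}\right)^{j-1},\quad i\ge 0.$$ (a) If $\alpha<\bar\alpha_j$, there exists $K_1<\infty$ such that for all $k\ge K_1$, $x_i\to 0$ as $i\to\infty$. (b) If $\alpha>\bar\alpha_j$, there exists $K_2<\infty$ such that for all $k\ge K_2$, $x_i$ does not converge to $0$.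
   Context: The recursion is the density evolution of the LM1 verification-decoding algorithm (Luby–Mitzenmacher) for a $(j,k)$-regular LDPC code on the $q$-ary symmetric channel with error probability $\delta$ (equivalently, LM1 reconstruction of a strictly sparse signal whose fraction of nonzero entries is $\delta$); $x_i$ is the fraction of unverified messages after $i$ iterations, and $x_i\to0$ corresponds to successful decoding/reconstruction with high probability as the block length tends to infinity. *)

theory Defs
  imports Complex_Main
begin

definition alpha_bar :: "nat \<Rightarrow> real" where
  "alpha_bar j = (GREATEST \<alpha>. \<alpha> \<ge> 0 \<and>
     (\<forall>x\<in>{0<..1}. (1 - exp (- (\<alpha> ^ (j - 1) * x ^ (j - 1)))) ^ (j - 1) \<le> x))"

definition lm1_delta :: "nat \<Rightarrow> nat \<Rightarrow> real \<Rightarrow> real" where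
  "lm1_delta j k \<alpha> = \<alpha> * (real k - 1) powr (- (real j / (real j - 1)))"

fun lm1_seq :: "nat \<Rightarrow> nat \<Rightarrow> real \<Rightarrow> nat \<Rightarrow> real" where
  "lm1_seq j k \<delta> 0 = \<delta>"
| "lm1_seq j k \<delta> (Suc i) =
     (let x = lm1_seq j k \<delta> i in
      \<delta> * (1 - (1 - (1 - \<delta>) * (1 - (1 - x) ^ (k - 1)) ^ (j - 1) - x) ^ (k - 1)) ^ (j - 1))"

end

theory Submission imports Defs begin

definition fa :: "nat \<Rightarrow> real \<Rightarrow> real \<Rightarrow> real" where
  "fa m a x = (1 - exp (- (a ^ m * x ^ m))) ^ m"

definition PS :: "nat \<Rightarrow> real \<Rightarrow> bool" where
  "PS m a \<longleftrightarrow> a \<ge> 0 \<and> (\<forall>x\<in>{0<..1}. fa m a x \<le> x)"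

lemma alpha_bar_eq: "alpha_bar j = Greatest (PS (j - 1))"
  unfolding alpha_bar_def PS_def fa_def by simp

lemma PS_bound:
  assumes m: "m \<ge> 1" and P: "PS m a"
  shows "a \<le> 4 * real m"
proof (rule ccontr)
  assume "\<not> a \<le> 4 * real m"
  hence a: "a > 4 * real m" by simp
  define t where "t = (a/2) ^ m"
  have h1: "a/2 \<ge> 1" using a m by simp
  have "(a/2) ^ 1 \<le> (a/2) ^ m" using h1 m by (intro power_increasing) auto
  hence t1: "t \<ge> 2 * real m" using a unfolding t_def by simp
  have tt: "a ^ m * (1/2) ^ m = t" unfolding t_def by (simp add: power_divide)
  define z where "z = exp (- t)"
  have z0: "z > 0" unfolding z_def by simp
  have z1: "z \<le> 1" unfolding z_def using t1 by simp
  have "1 + t \<le> exp t" by simp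
  hence "z * (1 + t) \<le> 1" unfolding z_def using t1
    by (metis exp_minus_inverse exp_gt_zero mult.commute mult_left_mono less_imp_le)
  hence zb: "z \<le> 1 / (1 + t)" using t1 by (simp add: field_simps)
  have "1 + real m * (- z) \<le> (1 + (- z)) ^ m"
    by (rule Bernoulli_inequality) (use z1 in simp)
  moreover have "real m * z \<le> real m / (1 + t)" using mult_left_mono[OF zb, of "real m"] by simp
  moreover have "real m / (1 + t) < 1/2" using t1 m by (simp add: field_simps)
  ultimately have "(1 - z) ^ m > 1/2" by (simp only: diff_conv_add_uminus)
  moreover have "fa m a (1/2) \<le> 1/2" using P unfolding PS_def
    by (metis greaterThanAtMost_iff field_sum_of_halves less_add_same_cancel1 zero_less_divide_1_iff zero_less_numeral less_imp_le)
  ultimately show False unfolding fa_def z_def using tt by simp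
qed

lemma fa_mono:
  assumes "m \<ge> 1" "0 \<le> a" "a < b" "x > 0"
  shows "fa m a x < fa m b x"
proof -
  have "a ^ m * x ^ m < b ^ m * x ^ m"
    using assms by (intro mult_strict_right_mono power_strict_mono) auto
  hence "1 - exp (- (a ^ m * x ^ m)) < 1 - exp (- (b ^ m * x ^ m))" by simp
  moreover have "0 \<le> 1 - exp (- (a ^ m * x ^ m))" using assms by simp
  ultimately show ?thesis unfolding fa_def using assms by (intro power_strict_mono) auto
qed

lemma fa_mono_le:
  assumes "0 \<le> a" "a \<le> b" "x \<ge> 0"
  shows "fa m a x \<le> fa m b x"
proof -
  have "a ^ m * x ^ m \<le> b ^ m * x ^ m"
    using assms by (intro mult_right_mono power_mono) auto
  hence "1 - exp (- (a ^ m * x ^ m)) \<le> 1 - exp (- (b ^ m * x ^ m))" by simp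
  moreover have "0 \<le> 1 - exp (- (a ^ m * x ^ m))" using assms by simp
  ultimately show ?thesis unfolding fa_def using assms by (intro power_mono) auto
qed

lemma PS_0: "m \<ge> 1 \<Longrightarrow> PS m 0"
  unfolding PS_def fa_def by (auto simp: power_0_left)

lemma Greatest_PS:
  assumes m: "m \<ge> 1"
  shows "PS m (Sup (Collect (PS m))) \<and> (\<forall>a. PS m a \<longrightarrow> a \<le> Sup (Collect (PS m)))"
proof -
  define S where "S = Collect (PS m)"
  define s where "s = Sup S"
  have ne: "S \<noteq> {}" using PS_0[OF m] unfolding S_def by auto
  have bdd: "bdd_above S" unfolding S_def by (rule bdd_aboveI[of _ "4 * real m"]) (use PS_bound[OF m] in auto)
  have ub: "\<forall>a. PS m a \<longrightarrow> a \<le> s" unfolding s_def S_def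
    using bdd S_def by (auto intro: cSup_upper)
  have s0: "s \<ge> 0" using ub PS_0[OF m] by auto
  have "PS m s"
  proof (cases "s = 0")
    case True thus ?thesis using PS_0[OF m] by simp
  next
    case False
    hence spos: "s > 0" using s0 by simp
    show ?thesis unfolding PS_def
    proof (intro conjI ballI)
      show "0 \<le> s" by fact
      fix x :: real assume x: "x \<in> {0<..1}"
      show "fa m s x \<le> x"
      proof (rule ccontr)
        assume "\<not> fa m s x \<le> x"
        hence gt: "fa m s x > x" by simp
        have "isCont (\<lambda>a. fa m a x) s" unfolding fa_def by (intro continuous_intros)
        hence "((\<lambda>a. fa m a x) \<longlongrightarrow> fa m s x) (at_left s)"
          by (simp add: isCont_def filterlim_at_split)
        hence "eventually (\<lambda>a. fa m a x > x) (at_left s)"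
          using gt by (rule order_tendstoD)
        then obtain b where b: "b < s" "\<And>a. b < a \<Longrightarrow> a < s \<Longrightarrow> fa m a x > x"
          unfolding eventually_at_left_field by blast
        have "max b 0 < Sup S" using b spos s_def by simp
        then obtain a where a: "a \<in> S" "max b 0 < a" using less_cSup_iff[OF ne bdd] by blast
        have as: "a \<le> s" using a ub S_def by auto
        have Pa: "PS m a" using a S_def by simp
        show False
        proof (cases "a = s")
          case True thus False using Pa gt x unfolding PS_def by force
        next
          case False
          hence "fa m a x > x" using b(2)[of a] a as by simp
          thus False using Pa x unfolding PS_def by force
        qed
      qed
    qed
  qed
  thus ?thesis using ub unfolding s_def S_def by blast
qed

lemma alpha_bar_props:
  assumes "j \<ge> 2"
  shows "PS (j-1) (alpha_bar j)" "\<And>a. PS (j-1) a \<Longrightarrow> a \<le> alpha_bar j"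
proof -
  have m: "j - 1 \<ge> 1" using assms by simp
  have e: "alpha_bar j = Sup (Collect (PS (j-1)))"
    unfolding alpha_bar_eq using Greatest_PS[OF m] by (intro Greatest_equality) auto
  show "PS (j-1) (alpha_bar j)" "\<And>a. PS (j-1) a \<Longrightarrow> a \<le> alpha_bar j"
    using Greatest_PS[OF m] unfolding e by auto
qed


definition Gm :: "nat \<Rightarrow> nat \<Rightarrow> real \<Rightarrow> real \<Rightarrow> real" where
  "Gm m d \<delta> x = \<delta> * (1 - (1 - (1 - \<delta>) * (1 - (1 - x) ^ d) ^ m - x) ^ d) ^ m"

lemma common_bounds:
  fixes d m :: nat and \<delta> \<epsilon> x y \<alpha> :: real
  assumes m: "m \<ge> 1" and d: "d \<ge> 1" and dp: "\<delta> > 0" "\<delta> \<le> 1"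
    and ed: "\<epsilon> = real d * \<delta>" and ea: "real d * \<epsilon> ^ m = \<alpha> ^ m"
    and x: "0 < x" "x \<le> \<delta>" and y: "y = x / \<delta>" and e1: "\<epsilon> \<le> 1"
  defines "p \<equiv> 1 - (1 - x) ^ d"
  defines "u \<equiv> (1 - \<delta>) * p ^ m + x"
  shows "0 \<le> p" "p \<le> \<epsilon> * y" "\<epsilon> * y \<le> \<epsilon>" "0 < y" "y \<le> 1" "x = \<delta> * y"
    "0 \<le> u" "u \<le> \<epsilon> + \<delta>" "real d * u \<le> \<alpha> ^ m * y ^ m + \<epsilon> * y"
    "real d * x = \<epsilon> * y" "real d * (\<epsilon> * y) ^ m = \<alpha> ^ m * y ^ m"
proof -
  show xy: "x = \<delta> * y" using y dp by simp
  show y0: "0 < y" using x dp y by simp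
  show y1: "y \<le> 1" using x dp y by simp
  have x1: "x \<le> 1" using x dp by simp
  have e0: "\<epsilon> \<ge> 0" using ed dp by simp
  show dx: "real d * x = \<epsilon> * y" using xy ed by simp
  have "(1 - x) ^ d \<le> 1" using x x1 by (intro power_le_one) auto
  thus p0: "0 \<le> p" unfolding p_def by simp
  have "1 + real d * (- x) \<le> (1 + (- x)) ^ d" using x1 by (intro Bernoulli_inequality) simp
  hence "p \<le> real d * x" unfolding p_def by simp
  thus pe: "p \<le> \<epsilon> * y" using dx by simp
  show ey: "\<epsilon> * y \<le> \<epsilon>" using e0 y1 by (simp add: mult_left_le)
  have ey1: "\<epsilon> * y \<le> 1" using ey e1 by simp
  have ey0: "0 \<le> \<epsilon> * y" using e0 y0 by simp
  have pm: "p ^ m \<le> (\<epsilon> * y) ^ m" using p0 pe by (intro power_mono) auto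
  have "(1 - \<delta>) * p ^ m \<le> p ^ m" using dp p0 by (simp add: mult_left_le_one_le)
  hence u1: "u \<le> (\<epsilon> * y) ^ m + x" unfolding u_def using pm by simp
  have "(\<epsilon> * y) ^ m \<le> (\<epsilon> * y) ^ 1" using ey0 ey1 m by (intro power_decreasing) auto
  thus "u \<le> \<epsilon> + \<delta>" using u1 ey x by simp
  show "0 \<le> u" unfolding u_def using dp p0 x by simp
  show de: "real d * (\<epsilon> * y) ^ m = \<alpha> ^ m * y ^ m" using ea by (simp add: power_mult_distrib)
  have "real d * u \<le> real d * ((\<epsilon> * y) ^ m + x)" using u1 by (simp add: mult_left_mono)
  thus "real d * u \<le> \<alpha> ^ m * y ^ m + \<epsilon> * y" using de dx by (simp add: distrib_left)
qed

lemma upper_bound: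
  fixes d m :: nat and \<delta> \<epsilon> x y \<alpha> :: real
  assumes m: "m \<ge> 1" and d: "d \<ge> 1" and dp: "\<delta> > 0" "\<delta> \<le> 1"
    and ed: "\<epsilon> = real d * \<delta>" and ea: "real d * \<epsilon> ^ m = \<alpha> ^ m"
    and x: "0 < x" "x \<le> \<delta>" and y: "y = x / \<delta>" and e1: "\<epsilon> \<le> 1"
    and small: "\<epsilon> + \<delta> \<le> 1/4"
  shows "0 \<le> Gm m d \<delta> x" "Gm m d \<delta> x \<le> \<delta>"
    "Gm m d \<delta> x \<le> \<delta> * (1 - exp (- ((\<alpha> ^ m * y ^ m + \<epsilon> * y) * (1 + 2 * (\<epsilon> + \<delta>))))) ^ m"
proof -
  define p where "p = 1 - (1 - x) ^ d"
  define u where "u = (1 - \<delta>) * p ^ m + x"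
  note cb = common_bounds[OF m d dp ed ea x y e1, folded p_def, folded u_def]
  define W where "W = (\<alpha> ^ m * y ^ m + \<epsilon> * y) * (1 + 2 * (\<epsilon> + \<delta>))"
  have u0: "0 \<le> u" and u1: "u \<le> 1/4" using cb small by auto
  have "0 \<le> real d * \<epsilon> ^ m" using ed dp by simp
  hence am: "0 \<le> \<alpha> ^ m * y ^ m" using ea cb by simp
  have eq: "Gm m d \<delta> x = \<delta> * (1 - (1 - u) ^ d) ^ m"
    unfolding Gm_def u_def p_def by (simp add: algebra_simps)
  have B1: "(1 - u) ^ d \<le> 1" using u0 u1 by (intro power_le_one) auto
  have B0: "0 \<le> (1 - u) ^ d" using u1 by simp
  have ln: "- u - 2 * u\<^sup>2 \<le> ln (1 - u)" using u0 u1 by (intro ln_one_minus_pos_lower_bound) auto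
  have eB: "(1 - u) ^ d = exp (real d * ln (1 - u))"
    using u1 by (simp add: exp_of_nat_mult)
  have "real d * ln (1 - u) \<ge> real d * (- u - 2 * u\<^sup>2)"
    using ln by (simp add: mult_left_mono)
  hence e2: "exp (real d * ln (1 - u)) \<ge> exp (- ((real d * u) * (1 + 2 * u)))"
    by (simp add: algebra_simps power2_eq_square)
  have "(real d * u) * (1 + 2 * u) \<le> W"
    unfolding W_def using cb u0 am by (intro mult_mono) auto
  hence "exp (- W) \<le> exp (- ((real d * u) * (1 + 2 * u)))" by simp
  hence "(1 - u) ^ d \<ge> exp (- W)" using eB e2 by linarith
  hence le: "1 - (1 - u) ^ d \<le> 1 - exp (- W)" by simp
  have ge0: "0 \<le> 1 - (1 - u) ^ d" using B1 by simp
  have le1: "1 - (1 - u) ^ d \<le> 1" using B0 by simp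
  have "(1 - (1 - u) ^ d) ^ m \<le> 1" using ge0 le1 by (intro power_le_one) auto
  thus "0 \<le> Gm m d \<delta> x" "Gm m d \<delta> x \<le> \<delta>" unfolding eq using dp ge0
    by (auto simp: mult_left_le)
  have "(1 - (1 - u) ^ d) ^ m \<le> (1 - exp (- W)) ^ m" using ge0 le by (intro power_mono)
  thus "Gm m d \<delta> x \<le> \<delta> * (1 - exp (- ((\<alpha> ^ m * y ^ m + \<epsilon> * y) * (1 + 2 * (\<epsilon> + \<delta>))))) ^ m"
    unfolding eq W_def[symmetric] using dp by (simp add: mult_left_mono)
qed

lemma lower_bound:
  fixes d m :: nat and \<delta> \<epsilon> x y ys \<alpha> :: real
  assumes m: "m \<ge> 1" and d: "d \<ge> 1" and dp: "\<delta> > 0" "\<delta> \<le> 1"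
    and ed: "\<epsilon> = real d * \<delta>" and ea: "real d * \<epsilon> ^ m = \<alpha> ^ m" and a0: "\<alpha> \<ge> 0"
    and x: "\<delta> * ys \<le> x" "x \<le> \<delta>" and ys: "0 < ys" and e1: "\<epsilon> \<le> 1/2"
    and small: "\<epsilon> + \<delta> \<le> 1"
  shows "Gm m d \<delta> x \<le> \<delta>"
    "\<delta> * (1 - exp (- ((1 - \<delta>) / (1 + \<epsilon>) ^ m * (\<alpha> ^ m * ys ^ m)))) ^ m \<le> Gm m d \<delta> x"
proof -
  define y where "y = x / \<delta>"
  have e1': "\<epsilon> \<le> 1" using e1 by simp
  have x0: "0 < x" using x dp ys by (metis mult_pos_pos order_less_le_trans)
  define p where "p = 1 - (1 - x) ^ d"
  define u where "u = (1 - \<delta>) * p ^ m + x"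
  note cb = common_bounds[OF m d dp ed ea x0 x(2) y_def e1', folded p_def, folded u_def]
  have yys: "ys \<le> y" using x dp unfolding y_def by (simp add: field_simps)
  define R where "R = (1 - \<delta>) / (1 + \<epsilon>) ^ m * (\<alpha> ^ m * ys ^ m)"
  have u0: "0 \<le> u" and u1: "u \<le> 1" using cb small e1 by auto
  have e0: "\<epsilon> \<ge> 0" using ed dp by simp
  have eq: "Gm m d \<delta> x = \<delta> * (1 - (1 - u) ^ d) ^ m"
    unfolding Gm_def u_def p_def by (simp add: algebra_simps)
  have B1: "(1 - u) ^ d \<le> 1" using u0 u1 by (intro power_le_one) auto
  have B0: "0 \<le> (1 - u) ^ d" using u1 by simp
  define t where "t = real d * x"
  have t: "t = \<epsilon> * y" using cb t_def by simp
  have t0: "0 \<le> t" using t_def x0 by simp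
  have te: "t \<le> \<epsilon>" using cb t by simp
  have "(1 - x) \<le> exp (- x)" using exp_ge_add_one_self[of "- x"] by simp
  hence "(1 - x) ^ d \<le> exp (- x) ^ d" using x0 x(2) dp(2)
    by (intro power_mono) auto
  also have "\<dots> = exp (- t)" unfolding t_def by (simp add: exp_of_nat_mult[symmetric])
  also have "exp (- t) \<le> 1 / (1 + t)"
  proof -
    have "1 + t \<le> exp t" by simp
    thus ?thesis using t0 by (simp add: exp_minus field_simps)
  qed
  finally have "p \<ge> 1 - 1 / (1 + t)" unfolding p_def by simp
  hence "p \<ge> t / (1 + t)" using t0 by (simp add: field_simps)
  moreover have "t / (1 + \<epsilon>) \<le> t / (1 + t)" using t0 te by (intro divide_left_mono) auto
  ultimately have pt: "p \<ge> t / (1 + \<epsilon>)" by simp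
  have "(t / (1 + \<epsilon>)) ^ m \<le> p ^ m" using pt t0 e0 by (intro power_mono) auto
  hence "(1 - \<delta>) * (t / (1 + \<epsilon>)) ^ m \<le> (1 - \<delta>) * p ^ m" using dp by (simp add: mult_left_mono)
  hence "real d * ((1 - \<delta>) * (t / (1 + \<epsilon>)) ^ m) \<le> real d * u"
    unfolding u_def using x0 by (intro mult_left_mono) auto
  moreover have "real d * ((1 - \<delta>) * (t / (1 + \<epsilon>)) ^ m) = (1 - \<delta>) / (1 + \<epsilon>) ^ m * (\<alpha> ^ m * y ^ m)"
    using cb(11) unfolding t by (simp add: power_divide)
  moreover have "(1 - \<delta>) / (1 + \<epsilon>) ^ m * (\<alpha> ^ m * ys ^ m) \<le> (1 - \<delta>) / (1 + \<epsilon>) ^ m * (\<alpha> ^ m * y ^ m)"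
    using dp e0 a0 ys yys by (intro mult_left_mono power_mono) auto
  ultimately have Ru: "R \<le> real d * u" unfolding R_def by linarith
  have "1 - u \<le> exp (- u)" using exp_ge_add_one_self[of "- u"] by simp
  hence "(1 - u) ^ d \<le> exp (- u) ^ d" using u1 by (intro power_mono) auto
  also have "\<dots> = exp (- (real d * u))" by (simp add: exp_of_nat_mult[symmetric])
  also have "\<dots> \<le> exp (- R)" using Ru by simp
  finally have le: "1 - exp (- R) \<le> 1 - (1 - u) ^ d" by simp
  have R0: "0 \<le> R" unfolding R_def using dp e0 a0 ys by simp
  have ge0: "0 \<le> 1 - exp (- R)" using R0 by simp
  have le1: "1 - (1 - u) ^ d \<le> 1" using B0 by simp
  have "(1 - (1 - u) ^ d) ^ m \<le> 1" using le1 ge0 le B1 by (intro power_le_one) auto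
  thus "Gm m d \<delta> x \<le> \<delta>" unfolding eq using dp
    by (auto simp: mult_left_le)
  have "(1 - exp (- R)) ^ m \<le> (1 - (1 - u) ^ d) ^ m" using ge0 le by (intro power_mono)
  thus "\<delta> * (1 - exp (- ((1 - \<delta>) / (1 + \<epsilon>) ^ m * (\<alpha> ^ m * ys ^ m)))) ^ m \<le> Gm m d \<delta> x"
    unfolding eq R_def[symmetric] using dp by (simp add: mult_left_mono)
qed


lemma eps_eq:
  assumes j: "j \<ge> 2" and k: "k \<ge> 2"
  shows "real (k - 1) * lm1_delta j k \<alpha> = \<alpha> * (real k - 1) powr (- 1 / real (j - 1))"
    "real (k - 1) * (\<alpha> * (real k - 1) powr (- 1 / real (j - 1))) ^ (j - 1) = \<alpha> ^ (j - 1)"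
proof -
  define d where "d = real k - 1"
  have d: "d \<ge> 1" using k unfolding d_def by simp
  have rk: "real (k - 1) = d" using k unfolding d_def by (simp add: of_nat_diff)
  have rj: "real (j - 1) = real j - 1" using j by (simp add: of_nat_diff)
  have jm: "real j - 1 > 0" using j by simp
  have ex: "1 + (- (real j / (real j - 1))) = - 1 / (real j - 1)"
    using jm by (simp add: field_simps)
  have "d * d powr (- (real j / (real j - 1))) = d powr (1 + (- (real j / (real j - 1))))"
    using d by (simp only: powr_add powr_one)
  thus "real (k - 1) * lm1_delta j k \<alpha> = \<alpha> * (real k - 1) powr (- 1 / real (j - 1))"
    unfolding lm1_delta_def rk rj d_def[symmetric] ex by simp
  have "(d powr (- 1 / real (j - 1))) ^ (j - 1) = (d powr (- 1 / real (j - 1))) powr real (j - 1)"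
    using d by (simp add: powr_realpow)
  also have "\<dots> = d powr (-1)" unfolding powr_powr using j by simp
  also have "\<dots> = 1 / d" using d by (simp add: powr_minus inverse_eq_divide)
  finally have "(d powr (- 1 / real (j - 1))) ^ (j - 1) = 1 / d" .
  thus "real (k - 1) * (\<alpha> * (real k - 1) powr (- 1 / real (j - 1))) ^ (j - 1) = \<alpha> ^ (j - 1)"
    unfolding rk d_def[symmetric] using d by (simp add: power_mult_distrib)
qed

lemma km1_at_top: "filterlim (\<lambda>k::nat. real k - 1) at_top sequentially"
  using filterlim_tendsto_add_at_top[OF tendsto_const[of "-1::real"] filterlim_real_sequentially]
  by simp

lemma lims:
  assumes j: "j \<ge> 2"
  shows "(\<lambda>k. lm1_delta j k \<alpha>) \<longlonglongrightarrow> 0"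
    "(\<lambda>k. \<alpha> * (real k - 1) powr (- 1 / real (j - 1))) \<longlonglongrightarrow> 0"
proof -
  have jm: "real j - 1 > 0" using j by simp
  have "(\<lambda>k. (real k - 1) powr (- (real j / (real j - 1)))) \<longlonglongrightarrow> 0"
    by (rule tendsto_neg_powr[OF _ km1_at_top]) (use jm in simp)
  from tendsto_mult_right_zero[OF this, of \<alpha>]
  show "(\<lambda>k. lm1_delta j k \<alpha>) \<longlonglongrightarrow> 0" unfolding lm1_delta_def by simp
  have "real (j - 1) > 0" using j by simp
  hence "(\<lambda>k. (real k - 1) powr (- 1 / real (j - 1))) \<longlonglongrightarrow> 0"
    by (intro tendsto_neg_powr[OF _ km1_at_top]) simp
  from tendsto_mult_right_zero[OF this, of \<alpha>]
  show "(\<lambda>k. \<alpha> * (real k - 1) powr (- 1 / real (j - 1))) \<longlonglongrightarrow> 0" by simp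
qed

lemma seq_step: "lm1_seq j k \<delta> (Suc i) = Gm (j - 1) (k - 1) \<delta> (lm1_seq j k \<delta> i)"
  by (simp add: Gm_def Let_def)

lemma conv_zero:
  fixes s :: "nat \<Rightarrow> real" and G :: "real \<Rightarrow> real"
  assumes s0: "s 0 = \<delta>" and dp: "\<delta> > 0" and step: "\<And>n. s (Suc n) = G (s n)"
    and G0: "G 0 = 0" and cont: "\<And>x. isCont G x"
    and H: "\<And>x. 0 < x \<Longrightarrow> x \<le> \<delta> \<Longrightarrow> 0 \<le> G x \<and> G x < x"
  shows "s \<longlonglongrightarrow> 0"
proof -
  have inv: "0 \<le> s n \<and> s n \<le> \<delta>" for n
  proof (induction n)
    case 0 thus ?case using s0 dp by simp
  next
    case (Suc n)
    show ?case
    proof (cases "s n = 0")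
      case True thus ?thesis using step G0 dp by simp
    next
      case False
      hence "0 < s n" using Suc by simp
      thus ?thesis using H[of "s n"] Suc step[of n] by simp
    qed
  qed
  have dec: "s (Suc n) \<le> s n" for n
  proof (cases "s n = 0")
    case True thus ?thesis using step G0 by simp
  next
    case False
    hence "0 < s n" using inv[of n] by simp
    thus ?thesis using H[of "s n"] inv[of n] step[of n] by simp
  qed
  have "decseq s" using dec by (simp add: decseq_Suc_iff)
  then obtain L where L: "s \<longlonglongrightarrow> L" "\<forall>i. L \<le> s i"
    using decseq_convergent[of s 0] inv by blast
  have L0: "L \<ge> 0" using L(1) inv by (intro LIMSEQ_le_const) auto
  have Ld: "L \<le> \<delta>" using L(2) s0 by (metis)
  have "(\<lambda>n. G (s n)) \<longlonglongrightarrow> G L" using cont L(1) by (rule isCont_tendsto_compose)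
  moreover have "(\<lambda>n. G (s n)) \<longlonglongrightarrow> L" using L(1) unfolding step[symmetric]
    by (rule LIMSEQ_Suc)
  ultimately have "G L = L" using LIMSEQ_unique by blast
  hence "L = 0" using H[of L] L0 Ld by (cases "L = 0") auto
  thus ?thesis using L(1) by simp
qed


lemma part_a:
  assumes j: "j \<ge> 2" and a: "\<alpha> > 0" and lt: "\<alpha> < alpha_bar j"
  shows "\<exists>K1::nat. \<forall>k\<ge>K1. k \<ge> 2 \<and> lm1_delta j k \<alpha> \<le> 1 \<longrightarrow>
               (lm1_seq j k (lm1_delta j k \<alpha>)) \<longlonglongrightarrow> 0"
proof -
  define m where "m = j - 1"
  have m: "m \<ge> 1" using j m_def by simp
  define ab where "ab = alpha_bar j"
  have Pab: "PS m ab" using alpha_bar_props(1)[OF j] unfolding m_def ab_def .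
  define a1 where "a1 = (\<alpha> + ab) / 2"
  have a1: "\<alpha> < a1" "a1 < ab" using lt unfolding a1_def ab_def by auto
  have am: "\<alpha> ^ m < a1 ^ m" using a a1 m by (intro power_strict_mono) auto
  define y0 where "y0 = min 1 (1 / (8 * \<alpha> ^ m))"
  have y0: "0 < y0" "y0 \<le> 1" "\<alpha> ^ m * y0 \<le> 1/8" using a unfolding y0_def
    by (auto simp: min_def field_simps)
  define dl where "dl = (\<lambda>k. lm1_delta j k \<alpha>)"
  define ep where "ep = (\<lambda>k::nat. \<alpha> * (real k - 1) powr (- 1 / real m))"
  have Ld: "dl \<longlonglongrightarrow> 0" and Le: "ep \<longlonglongrightarrow> 0"
    using lims[OF j, of \<alpha>] unfolding dl_def ep_def m_def by auto
  have "(\<lambda>k. (\<alpha> ^ m + ep k / y0 ^ (m - 1)) * (1 + 2 * (ep k + dl k)))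
        \<longlonglongrightarrow> (\<alpha> ^ m + 0 / y0 ^ (m - 1)) * (1 + 2 * (0 + 0))"
    by (intro tendsto_intros Ld Le) (use y0 in simp)
  hence E3: "eventually (\<lambda>k. (\<alpha> ^ m + ep k / y0 ^ (m - 1)) * (1 + 2 * (ep k + dl k)) < a1 ^ m) sequentially"
    using am by (intro order_tendstoD(2)) auto
  have E1: "eventually (\<lambda>k. ep k < 1/8) sequentially" using Le by (intro order_tendstoD(2)) auto
  have E2: "eventually (\<lambda>k. dl k < 1/8) sequentially" using Ld by (intro order_tendstoD(2)) auto
  have E0: "eventually (\<lambda>k::nat. k \<ge> 2) sequentially" by (rule eventually_ge_at_top)
  from eventually_conj[OF E0 eventually_conj[OF E1 eventually_conj[OF E2 E3]]]
  obtain K where K: "\<And>k. k \<ge> K \<Longrightarrow> k \<ge> 2 \<and> ep k < 1/8 \<and> dl k < 1/8 \<and>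
      (\<alpha> ^ m + ep k / y0 ^ (m - 1)) * (1 + 2 * (ep k + dl k)) < a1 ^ m"
    unfolding eventually_sequentially by blast
  show ?thesis
  proof (intro exI allI impI)
    fix k assume kK: "K \<le> k"
    note Kk = K[OF kK]
    define d where "d = k - 1"
    have d: "d \<ge> 1" using Kk d_def by linarith
    define \<delta> where "\<delta> = dl k"
    define \<epsilon> where "\<epsilon> = ep k"
    have ed: "\<epsilon> = real d * \<delta>" using eps_eq(1)[OF j, of k \<alpha>] Kk
      unfolding \<epsilon>_def ep_def \<delta>_def dl_def d_def m_def by simp
    have ea: "real d * \<epsilon> ^ m = \<alpha> ^ m" using eps_eq(2)[OF j, of k \<alpha>] Kk
      unfolding \<epsilon>_def ep_def d_def m_def by simp
    have dp: "\<delta> > 0" unfolding \<delta>_def dl_def lm1_delta_def using a Kk by simp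
    have e0: "\<epsilon> \<ge> 0" using ed dp by simp
    have e8: "\<epsilon> < 1/8" and d8: "\<delta> < 1/8" using Kk unfolding \<epsilon>_def \<delta>_def by auto
    have C3: "(\<alpha> ^ m + \<epsilon> / y0 ^ (m - 1)) * (1 + 2 * (\<epsilon> + \<delta>)) < a1 ^ m"
      using Kk unfolding \<epsilon>_def \<delta>_def by auto
    have dp1: "\<delta> \<le> 1" using d8 by simp
    have e1: "\<epsilon> \<le> 1" using e8 by simp
    have small: "\<epsilon> + \<delta> \<le> 1/4" using e8 d8 by simp
    define G where "G = Gm m d \<delta>"
    have H: "0 \<le> G x \<and> G x < x" if x: "0 < x" "x \<le> \<delta>" for x
    proof -
      define y where "y = x / \<delta>"
      note ub = upper_bound[OF m d dp dp1 ed ea x y_def e1 small]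
      note cb = common_bounds[OF m d dp dp1 ed ea x y_def e1]
      have y: "0 < y" "y \<le> 1" "x = \<delta> * y" using cb by auto
      define W where "W = (\<alpha> ^ m * y ^ m + \<epsilon> * y) * (1 + 2 * (\<epsilon> + \<delta>))"
      have W0: "0 \<le> W" unfolding W_def using a e0 dp y by simp
      have main: "(1 - exp (- W)) ^ m < y"
      proof (cases "y ^ (m - 1) \<ge> y0 ^ (m - 1)")
        case True
        have ym: "y ^ m = y * y ^ (m - 1)" using m by (metis Suc_diff_1 less_le_trans zero_less_one power_Suc)
        have "\<epsilon> * y = (\<epsilon> / y0 ^ (m - 1)) * (y * y0 ^ (m - 1))" using y0 by simp
        also have "\<dots> \<le> (\<epsilon> / y0 ^ (m - 1)) * y ^ m" unfolding ym using True e0 y y0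
          by (intro mult_left_mono) auto
        finally have "\<alpha> ^ m * y ^ m + \<epsilon> * y \<le> (\<alpha> ^ m + \<epsilon> / y0 ^ (m - 1)) * y ^ m"
          by (simp add: distrib_right)
        hence "W \<le> ((\<alpha> ^ m + \<epsilon> / y0 ^ (m - 1)) * (1 + 2 * (\<epsilon> + \<delta>))) * y ^ m"
          unfolding W_def using e0 dp by (simp add: mult_right_mono mult.commute mult.left_commute)
        also have "\<dots> \<le> a1 ^ m * y ^ m" using C3 y by (intro mult_right_mono) auto
        finally have "1 - exp (- W) \<le> 1 - exp (- (a1 ^ m * y ^ m))" by simp
        hence "(1 - exp (- W)) ^ m \<le> fa m a1 y" unfolding fa_def using W0
          by (intro power_mono) auto
        also have "\<dots> < fa m ab y" using fa_mono[OF m _ a1(2) y(1)] a a1 by simp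
        also have "\<dots> \<le> y" using Pab y unfolding PS_def by auto
        finally show ?thesis .
      next
        case False
        have m2: "m \<ge> 2"
        proof (rule ccontr)
          assume "\<not> m \<ge> 2" hence "m - 1 = 0" using m by simp
          thus False using False by simp
        qed
        have yy0: "y < y0"
        proof (rule ccontr)
          assume "\<not> y < y0"
          hence "y0 ^ (m - 1) \<le> y ^ (m - 1)" using y0 by (intro power_mono) auto
          thus False using False by simp
        qed
        have ym: "y ^ m = y * y ^ (m - 1)" using m by (metis Suc_diff_1 less_le_trans zero_less_one power_Suc)
        have "y ^ (m - 1) \<le> y0 ^ (m - 1)" using False by simp
        also have "y0 ^ (m - 1) \<le> y0 ^ 1" using y0 m2 by (intro power_decreasing) auto
        finally have "y ^ m \<le> y * y0" unfolding ym using y by (simp add: mult_left_mono)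
        hence "\<alpha> ^ m * y ^ m \<le> (\<alpha> ^ m * y0) * y" using a
          by (metis mult.assoc mult.commute mult_left_mono zero_le_power less_imp_le)
        also have "\<dots> \<le> (1/8) * y" using y0 y by (intro mult_right_mono) auto
        moreover have "\<epsilon> * y \<le> (1/8) * y" using e8 y by (intro mult_right_mono) auto
        ultimately have "\<alpha> ^ m * y ^ m + \<epsilon> * y \<le> y / 4" by linarith
        hence "W \<le> (y / 4) * (1 + 2 * (\<epsilon> + \<delta>))" unfolding W_def using e0 dp
          by (intro mult_right_mono) auto
        also have "\<dots> \<le> (y / 4) * (3/2)" using small y by (intro mult_left_mono) auto
        also have "\<dots> < y" using y by simp
        finally have Wy: "W < y" .
        have "1 - exp (- W) \<le> W" using exp_ge_add_one_self[of "- W"] by simp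
        moreover have "(1 - exp (- W)) ^ m \<le> (1 - exp (- W)) ^ 1" using W0 m
          by (intro power_decreasing) auto
        ultimately show ?thesis using Wy by simp
      qed
      have "G x \<le> \<delta> * (1 - exp (- W)) ^ m" using ub(3) unfolding G_def W_def .
      also have "\<dots> < \<delta> * y" using main dp by simp
      finally show ?thesis using ub(1) y unfolding G_def by simp
    qed
    have G0: "G 0 = 0" unfolding G_def Gm_def using m d by (simp add: power_0_left)
    have cont: "isCont G x" for x unfolding G_def Gm_def by (intro continuous_intros)
    have s: "lm1_seq j k \<delta> (Suc n) = G (lm1_seq j k \<delta> n)" for n
      unfolding G_def m_def d_def by (rule seq_step)
    have "lm1_seq j k \<delta> \<longlonglongrightarrow> 0"
      by (rule conv_zero[where s="lm1_seq j k \<delta>" and G=G and \<delta>=\<delta>, OF _ dp s G0 cont H]) simp_all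
    thus "lm1_seq j k (lm1_delta j k \<alpha>) \<longlonglongrightarrow> 0" unfolding \<delta>_def dl_def .
  qed
qed


lemma part_b:
  assumes j: "j \<ge> 2" and a: "\<alpha> > 0" and gt: "\<alpha> > alpha_bar j"
  shows "\<exists>K2::nat. \<forall>k\<ge>K2. k \<ge> 2 \<and> lm1_delta j k \<alpha> \<le> 1 \<longrightarrow>
               \<not> ((lm1_seq j k (lm1_delta j k \<alpha>)) \<longlonglongrightarrow> 0)"
proof -
  define m where "m = j - 1"
  have m: "m \<ge> 1" using j m_def by simp
  have "\<not> PS m \<alpha>" using alpha_bar_props(2)[OF j, of \<alpha>] gt unfolding m_def by auto
  then obtain ys where ys: "0 < ys" "ys \<le> 1" "fa m \<alpha> ys > ys"
    unfolding PS_def using a by (auto simp: not_le)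
  define dl where "dl = (\<lambda>k. lm1_delta j k \<alpha>)"
  define ep where "ep = (\<lambda>k::nat. \<alpha> * (real k - 1) powr (- 1 / real m))"
  have Ld: "dl \<longlonglongrightarrow> 0" and Le: "ep \<longlonglongrightarrow> 0"
    using lims[OF j, of \<alpha>] unfolding dl_def ep_def m_def by auto
  have "(\<lambda>k. (1 - exp (- ((1 - dl k) / (1 + ep k) ^ m * (\<alpha> ^ m * ys ^ m)))) ^ m)
        \<longlonglongrightarrow> (1 - exp (- ((1 - 0) / (1 + 0) ^ m * (\<alpha> ^ m * ys ^ m)))) ^ m"
    by (intro tendsto_intros Ld Le) simp
  hence E3: "eventually (\<lambda>k. (1 - exp (- ((1 - dl k) / (1 + ep k) ^ m * (\<alpha> ^ m * ys ^ m)))) ^ m > ys) sequentially"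
    using ys(3) unfolding fa_def by (intro order_tendstoD(1)) auto
  have E1: "eventually (\<lambda>k. ep k < 1/2) sequentially" using Le by (intro order_tendstoD(2)) auto
  have E2: "eventually (\<lambda>k. dl k < 1/2) sequentially" using Ld by (intro order_tendstoD(2)) auto
  have E0: "eventually (\<lambda>k::nat. k \<ge> 2) sequentially" by (rule eventually_ge_at_top)
  from eventually_conj[OF E0 eventually_conj[OF E1 eventually_conj[OF E2 E3]]]
  obtain K where K: "\<And>k. k \<ge> K \<Longrightarrow> k \<ge> 2 \<and> ep k < 1/2 \<and> dl k < 1/2 \<and>
      (1 - exp (- ((1 - dl k) / (1 + ep k) ^ m * (\<alpha> ^ m * ys ^ m)))) ^ m > ys"
    unfolding eventually_sequentially by blast
  show ?thesis
  proof (intro exI allI impI)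
    fix k assume kK: "K \<le> k"
    note Kk = K[OF kK]
    define d where "d = k - 1"
    have d: "d \<ge> 1" using Kk d_def by linarith
    define \<delta> where "\<delta> = dl k"
    define \<epsilon> where "\<epsilon> = ep k"
    have ed: "\<epsilon> = real d * \<delta>" using eps_eq(1)[OF j, of k \<alpha>] Kk
      unfolding \<epsilon>_def ep_def \<delta>_def dl_def d_def m_def by simp
    have ea: "real d * \<epsilon> ^ m = \<alpha> ^ m" using eps_eq(2)[OF j, of k \<alpha>] Kk
      unfolding \<epsilon>_def ep_def d_def m_def by simp
    have dp: "\<delta> > 0" unfolding \<delta>_def dl_def lm1_delta_def using a Kk by simp
    have e2: "\<epsilon> \<le> 1/2" and d2: "\<delta> < 1/2" using Kk unfolding \<epsilon>_def \<delta>_def by auto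
    have C3: "(1 - exp (- ((1 - \<delta>) / (1 + \<epsilon>) ^ m * (\<alpha> ^ m * ys ^ m)))) ^ m > ys"
      using Kk unfolding \<epsilon>_def \<delta>_def by auto
    have dp1: "\<delta> \<le> 1" using d2 by simp
    have small: "\<epsilon> + \<delta> \<le> 1" using e2 d2 by simp
    have inv: "\<delta> * ys \<le> lm1_seq j k \<delta> n \<and> lm1_seq j k \<delta> n \<le> \<delta>" for n
    proof (induction n)
      case 0 thus ?case using ys dp by (simp add: mult_left_le)
    next
      case (Suc n)
      have st: "lm1_seq j k \<delta> (Suc n) = Gm m d \<delta> (lm1_seq j k \<delta> n)"
        unfolding m_def d_def by (rule seq_step)
      note lb = lower_bound[OF m d dp dp1 ed ea _ _ _ ys(1) e2 small, of "lm1_seq j k \<delta> n"]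
      have "\<delta> * ys \<le> \<delta> * (1 - exp (- ((1 - \<delta>) / (1 + \<epsilon>) ^ m * (\<alpha> ^ m * ys ^ m)))) ^ m"
        using C3 dp by simp
      thus ?case using lb Suc a unfolding st by auto
    qed
    have pos: "\<delta> * ys > 0" using dp ys by simp
    show "\<not> lm1_seq j k (lm1_delta j k \<alpha>) \<longlonglongrightarrow> 0"
    proof
      assume "lm1_seq j k (lm1_delta j k \<alpha>) \<longlonglongrightarrow> 0"
      hence "lm1_seq j k \<delta> \<longlonglongrightarrow> 0" unfolding \<delta>_def dl_def .
      hence "eventually (\<lambda>n. lm1_seq j k \<delta> n < \<delta> * ys) sequentially"
        using pos by (intro order_tendstoD(2)) auto
      then obtain n where "lm1_seq j k \<delta> n < \<delta> * ys" unfolding eventually_sequentially by blast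
      thus False using inv[of n] by simp
    qed
  qed
qed

theorem theorem3:
  fixes j :: nat and \<alpha> :: real
  assumes "j \<ge> 2" and "\<alpha> > 0"
  shows "(\<alpha> < alpha_bar j \<longrightarrow>
            (\<exists>K1::nat. \<forall>k\<ge>K1. k \<ge> 2 \<and> lm1_delta j k \<alpha> \<le> 1 \<longrightarrow>
               (lm1_seq j k (lm1_delta j k \<alpha>)) \<longlonglongrightarrow> 0))
       \<and> (\<alpha> > alpha_bar j \<longrightarrow>
            (\<exists>K2::nat. \<forall>k\<ge>K2. k \<ge> 2 \<and> lm1_delta j k \<alpha> \<le> 1 \<longrightarrow>
               \<not> ((lm1_seq j k (lm1_delta j k \<alpha>)) \<longlonglongrightarrow> 0)))"
  using part_a[OF assms] part_b[OF assms] by blast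

end
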